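(* For every $\mu\in\Delta(\Omega)$ and $c\ge0$, in the optimization problem $$V(\mu,c)=\sup\Big\{\sum_m\lambda_mu^*_S(\nu_m):\sum_m\lambda_m\nu_m=\mu,\ \sum_m\lambda_mH(\nu_m)\ge H(\mu)-c\Big\}$$ the number of posteriors can be chosen to be at most $\min\{|A|,|\Omega|+1\}$; that is, the supremum is unchanged when restricted to splittings $(\lambda_m,\nu_m)_m$ with at most $\min\{|A|,|\Omega|+1\}$ elements.
   Context: For a finite set $S$, $\Delta(S)$ is the set of probability distributions on $S$. $\Omega$ is a finite set of states, $A$ a finite set of actions, $u_S,u_R:\Omega\times A\to\mathbb{R}$ payoff functions of sender and receiver. For $\nu\in\Delta(\Omega)$, $A^*(\nu)=\arg\max_{a\in A}\sum_\omega\nu(\omega)u_R(\omega,a)$ and $u^*_S(\nu)=\min_{a\in A^*(\nu)}\sum_\omega\nu(\omega)u_S(\omega,a)$. $H(q)=-\sum_sq(s)\log_2q(s)$ ($0\log0=0$). The supremum is over finite families $(\lambda_m,\nu_m)_m$ with $\nu_m\in\Delta(\Omega)$, $\lambda_m\ge0$, $\sum_m\lambda_m=1$. *)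

theory Defs
  imports "HOL-Analysis.Analysis"
begin

definition Delta :: "('s::finite \<Rightarrow> real) set" where
  "Delta = {q. (\<forall>s. 0 \<le> q s) \<and> (\<Sum>s\<in>UNIV. q s) = 1}"

definition H :: "('s::finite \<Rightarrow> real) \<Rightarrow> real" where
  "H q = - (\<Sum>s\<in>UNIV. (if q s = 0 then 0 else q s * log 2 (q s)))"

definition expu :: "('w::finite \<Rightarrow> 'a \<Rightarrow> real) \<Rightarrow> ('w \<Rightarrow> real) \<Rightarrow> 'a \<Rightarrow> real" where
  "expu u nu a = (\<Sum>w\<in>UNIV. nu w * u w a)"

definition Astar :: "('w::finite \<Rightarrow> 'a::finite \<Rightarrow> real) \<Rightarrow> ('w \<Rightarrow> real) \<Rightarrow> 'a set" where
  "Astar uR nu = {a. \<forall>b. expu uR nu b \<le> expu uR nu a}"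

text \<open>Sender's indirect utility u*_S(nu) (receiver breaks ties against the sender).\<close>
definition ustarS :: "('w::finite \<Rightarrow> 'a::finite \<Rightarrow> real) \<Rightarrow> ('w \<Rightarrow> 'a \<Rightarrow> real) \<Rightarrow> ('w \<Rightarrow> real) \<Rightarrow> real" where
  "ustarS uS uR nu = Min (expu uS nu ` Astar uR nu)"

definition feasible :: "('w::finite \<Rightarrow> real) \<Rightarrow> real \<Rightarrow> (real \<times> ('w \<Rightarrow> real)) list \<Rightarrow> bool" where
  "feasible mu c F \<longleftrightarrow>
     (\<forall>p\<in>set F. 0 \<le> fst p \<and> snd p \<in> Delta) \<and>
     (\<Sum>p\<leftarrow>F. fst p) = 1 \<and>
     (\<forall>w. (\<Sum>p\<leftarrow>F. fst p * snd p w) = mu w) \<and>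
     (\<Sum>p\<leftarrow>F. fst p * H (snd p)) \<ge> H mu - c"

definition objval :: "('w::finite \<Rightarrow> 'a::finite \<Rightarrow> real) \<Rightarrow> ('w \<Rightarrow> 'a \<Rightarrow> real) \<Rightarrow> (real \<times> ('w \<Rightarrow> real)) list \<Rightarrow> real" where
  "objval uS uR F = (\<Sum>p\<leftarrow>F. fst p * ustarS uS uR (snd p))"

definition V :: "('w::finite \<Rightarrow> 'a::finite \<Rightarrow> real) \<Rightarrow> ('w \<Rightarrow> 'a \<Rightarrow> real) \<Rightarrow> ('w \<Rightarrow> real) \<Rightarrow> real \<Rightarrow> real" where
  "V uS uR mu c = Sup (objval uS uR ` {F. feasible mu c F})"

end

theory Submission imports Defs begin

definition phi :: "real \<Rightarrow> real" where
  "phi x = (if x = 0 then 0 else x * log 2 x)"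

lemma convex_pos: "convex_on {0<..} (\<lambda>x::real. x * log 2 x)"
proof (rule convex_on_realI[where f' = "\<lambda>x. log 2 x + 1 / ln 2"])
  show "connected ({0<..} :: real set)" by simp
next
  fix x :: real assume "x \<in> {0<..}"
  then show "((\<lambda>x. x * log 2 x) has_real_derivative log 2 x + 1 / ln 2) (at x)"
    by (auto intro!: derivative_eq_intros simp: log_def field_simps)
next
  fix x y :: real assume "x \<in> {0<..}" "y \<in> {0<..}" "x \<le> y"
  then show "log 2 x + 1 / ln 2 \<le> log 2 y + 1 / ln 2" by simp
qed

lemma convex_phi: "convex_on {0..} phi"
proof (rule convex_onI)
  fix t x y :: real assume t: "0 < t" "t < 1" and x: "x \<in> {0..}" and y: "y \<in> {0..}"
  have key: "phi (s * z) \<le> s * phi z" if "0 < s" "s < 1" "0 \<le> z" for s z :: real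
  proof (cases "z = 0")
    case True then show ?thesis by (simp add: phi_def)
  next
    case False
    with that have z: "z > 0" by simp
    have "log 2 (s * z) = log 2 s + log 2 z" using that z by (simp add: log_mult)
    moreover have "log 2 s < 0" using that by simp
    ultimately have "s * z * log 2 (s * z) \<le> s * (z * log 2 z)"
      using that z by (simp add: algebra_simps mult_nonneg_nonpos)
    then show ?thesis using that z by (simp add: phi_def)
  qed
  show "phi ((1 - t) *\<^sub>R x + t *\<^sub>R y) \<le> (1 - t) * phi x + t * phi y"
  proof (cases "x = 0 \<or> y = 0")
    case True
    then show ?thesis
    proof
      assume "x = 0"
      then show ?thesis using key[of t y] t y by (simp add: phi_def)
    next
      assume "y = 0"
      then show ?thesis using key[of "1 - t" x] t x by (simp add: phi_def)
    qed
  next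
    case False
    with x y have "x > 0" "y > 0" by auto
    have "(1 - t) *\<^sub>R x + t *\<^sub>R y > 0" using \<open>x > 0\<close> \<open>y > 0\<close> t
      by (simp add: add_pos_pos)
    then show ?thesis
      using convex_onD[OF convex_pos, of t x y] \<open>x > 0\<close> \<open>y > 0\<close> t
      by (simp add: phi_def)
  qed
qed (simp add: convex_real_interval)


lemma H_phi: "H q = - (\<Sum>s\<in>UNIV. phi (q s))"
  by (simp add: H_def phi_def)

lemma H_concave:
  fixes v :: "'i \<Rightarrow> 's::finite \<Rightarrow> real"
  assumes K: "finite K" "K \<noteq> {}" and a: "\<And>k. k \<in> K \<Longrightarrow> 0 \<le> a k" "sum a K = 1"
    and v: "\<And>k. k \<in> K \<Longrightarrow> v k \<in> Delta"
  shows "(\<Sum>k\<in>K. a k * H (v k)) \<le> H (\<lambda>s. \<Sum>k\<in>K. a k * v k s)"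
proof -
  have pt: "phi (\<Sum>k\<in>K. a k * v k s) \<le> (\<Sum>k\<in>K. a k * phi (v k s))" for s
    using convex_on_sum[OF K convex_phi a(2) a(1), of "\<lambda>k. v k s"] v
    by (auto simp: Delta_def)
  have "(\<Sum>k\<in>K. a k * H (v k)) = - (\<Sum>s\<in>UNIV. \<Sum>k\<in>K. a k * phi (v k s))"
    by (simp add: H_phi sum_distrib_left sum_negf sum.swap[of _ K])
  also have "\<dots> \<le> - (\<Sum>s\<in>UNIV. phi (\<Sum>k\<in>K. a k * v k s))"
    using pt by (simp add: sum_mono)
  also have "\<dots> = H (\<lambda>s. \<Sum>k\<in>K. a k * v k s)" by (simp add: H_phi)
  finally show ?thesis .
qed

lemma Astar_ne: "\<exists>a. a \<in> Astar uR nu"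
proof -
  let ?f = "expu uR nu"
  have "Max (range ?f) \<in> range ?f" by (rule Max_in) auto
  then obtain a where "Max (range ?f) = ?f a" by blast
  moreover have "?f b \<le> Max (range ?f)" for b by (rule Max_ge) auto
  ultimately have "a \<in> Astar uR nu" unfolding Astar_def by simp
  then show ?thesis ..
qed

lemma ustar_attained: "\<exists>a\<in>Astar uR nu. expu uS nu a = ustarS uS uR nu"
proof -
  have "ustarS uS uR nu \<in> expu uS nu ` Astar uR nu"
  proof -
    obtain a where "a \<in> Astar uR nu" using Astar_ne by blast
    then have "expu uS nu ` Astar uR nu \<noteq> {}" by blast
    moreover have "finite (expu uS nu ` Astar uR nu)" by simp
    ultimately show ?thesis unfolding ustarS_def by (rule Min_in[rotated])
  qed
  then show ?thesis by auto
qed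

lemma ustar_le: "a \<in> Astar uR nu \<Longrightarrow> ustarS uS uR nu \<le> expu uS nu a"
  unfolding ustarS_def by (intro Min_le) auto

lemma expu_mix: "expu u (\<lambda>w. \<Sum>i\<in>K. c i * v i w) x = (\<Sum>i\<in>K. c i * expu u (v i) x)"
proof -
  have "expu u (\<lambda>w. \<Sum>i\<in>K. c i * v i w) x = (\<Sum>w\<in>UNIV. \<Sum>i\<in>K. c i * (v i w * u w x))"
    unfolding expu_def by (simp add: sum_distrib_right mult.assoc)
  also have "\<dots> = (\<Sum>i\<in>K. \<Sum>w\<in>UNIV. c i * (v i w * u w x))" by (rule sum.swap)
  also have "\<dots> = (\<Sum>i\<in>K. c i * expu u (v i) x)" unfolding expu_def by (simp add: sum_distrib_left)
  finally show ?thesis .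
qed

definition ffeas :: "('w::finite \<Rightarrow> real) \<Rightarrow> real \<Rightarrow> 'i set \<Rightarrow> ('i \<Rightarrow> real) \<Rightarrow> ('i \<Rightarrow> 'w \<Rightarrow> real) \<Rightarrow> bool" where
  "ffeas mu c I l v \<longleftrightarrow> finite I \<and> (\<forall>i\<in>I. 0 \<le> l i \<and> v i \<in> Delta) \<and> sum l I = 1 \<and>
     (\<forall>w. (\<Sum>i\<in>I. l i * v i w) = mu w) \<and> (\<Sum>i\<in>I. l i * H (v i)) \<ge> H mu - c"

definition fobj :: "('w::finite \<Rightarrow> 'a::finite \<Rightarrow> real) \<Rightarrow> ('w \<Rightarrow> 'a \<Rightarrow> real) \<Rightarrow> 'i set \<Rightarrow> ('i \<Rightarrow> real) \<Rightarrow> ('i \<Rightarrow> 'w \<Rightarrow> real) \<Rightarrow> real" where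
  "fobj uS uR I l v = (\<Sum>i\<in>I. l i * ustarS uS uR (v i))"

lemma step1:
  fixes uS uR :: "'w::finite \<Rightarrow> 'a::finite \<Rightarrow> real" and v :: "'i \<Rightarrow> 'w \<Rightarrow> real"
  assumes F: "ffeas mu c I l v"
  shows "\<exists>(J::'a set) l' v'. ffeas mu c J l' v' \<and> fobj uS uR I l v \<le> fobj uS uR J l' v'"
proof -
  from F have finI: "finite I" and l0: "\<And>i. i \<in> I \<Longrightarrow> 0 \<le> l i" and vD: "\<And>i. i \<in> I \<Longrightarrow> v i \<in> Delta"
    and s1: "sum l I = 1" and mean: "\<And>w. (\<Sum>i\<in>I. l i * v i w) = mu w"
    and ent: "(\<Sum>i\<in>I. l i * H (v i)) \<ge> H mu - c"
    by (auto simp: ffeas_def)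
  define Q where "Q = {i\<in>I. 0 < l i}"
  define act where "act i = (SOME a. a \<in> Astar uR (v i) \<and> expu uS (v i) a = ustarS uS uR (v i))" for i
  have act: "act i \<in> Astar uR (v i)" "expu uS (v i) (act i) = ustarS uS uR (v i)" for i
  proof -
    have "\<exists>a. a \<in> Astar uR (v i) \<and> expu uS (v i) a = ustarS uS uR (v i)"
      using ustar_attained[of uR "v i" uS] by blast
    from someI_ex[OF this] show "act i \<in> Astar uR (v i)" "expu uS (v i) (act i) = ustarS uS uR (v i)"
      unfolding act_def by blast+
  qed
  define J where "J = act ` Q"
  define fib where "fib a = {i. i \<in> Q \<and> act i = a}" for a
  define W where "W a = sum l (fib a)" for a
  define vb where "vb a = (\<lambda>w. \<Sum>i\<in>fib a. (l i / W a) * v i w)" for a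
  have finQ: "finite Q" using finI by (simp add: Q_def)
  have finF: "finite (fib a)" for a using finQ by (simp add: fib_def)
  have fibQ: "fib a \<subseteq> Q" for a by (auto simp: fib_def)
  have QI: "Q \<subseteq> I" by (auto simp: Q_def)
  have fI: "\<And>i a. i \<in> fib a \<Longrightarrow> i \<in> I" using fibQ QI by blast
  have lpos: "i \<in> fib a \<Longrightarrow> 0 < l i" for i a by (auto simp: fib_def Q_def)
  have Wpos: "a \<in> J \<Longrightarrow> 0 < W a" for a
  proof -
    assume "a \<in> J"
    then obtain i where "i \<in> Q" "act i = a" by (auto simp: J_def)
    then have "i \<in> fib a" by (simp add: fib_def)
    then show "0 < W a" unfolding W_def using finF lpos
      by (intro sum_pos2[of _ i]) (auto intro: less_imp_le)
  qed
  have sumQ: "(\<Sum>i\<in>I. l i * g i) = (\<Sum>i\<in>Q. l i * g i)" for g :: "'i \<Rightarrow> real"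
  proof (rule sum.mono_neutral_right[OF finI QI])
    show "\<forall>i\<in>I - Q. l i * g i = 0"
    proof
      fix i assume "i \<in> I - Q"
      then have "l i = 0" using l0[of i] by (auto simp: Q_def)
      then show "l i * g i = 0" by simp
    qed
  qed
  have grp: "(\<Sum>a\<in>J. \<Sum>i\<in>fib a. h i) = (\<Sum>i\<in>Q. h i)" for h :: "'i \<Rightarrow> real"
    unfolding fib_def J_def by (rule sum.group[OF finQ]) auto
  have mix: "W a * (\<Sum>i\<in>fib a. (l i / W a) * g i) = (\<Sum>i\<in>fib a. l i * g i)" if "a \<in> J" for a g
    using Wpos[OF that] by (simp add: sum_distrib_left)
  have wsum: "(\<Sum>i\<in>fib a. l i / W a) = 1" if "a \<in> J" for a
    using Wpos[OF that] by (simp add: W_def sum_divide_distrib[symmetric])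
  have vbD: "vb a \<in> Delta" if "a \<in> J" for a
  proof -
    have "0 \<le> vb a w" for w
      unfolding vb_def
    proof (rule sum_nonneg)
      fix i assume i: "i \<in> fib a"
      then have "0 \<le> v i w" using vD[OF fI[OF i]] by (simp add: Delta_def)
      moreover have "0 \<le> l i / W a" using lpos[OF i] Wpos[OF that] by simp
      ultimately show "0 \<le> l i / W a * v i w" by (rule mult_nonneg_nonneg[rotated])
    qed
    moreover have "(\<Sum>w\<in>UNIV. vb a w) = 1"
    proof -
      have "(\<Sum>w\<in>UNIV. vb a w) = (\<Sum>i\<in>fib a. \<Sum>w\<in>UNIV. (l i / W a) * v i w)"
        unfolding vb_def by (rule sum.swap)
      also have "\<dots> = (\<Sum>i\<in>fib a. (l i / W a) * (\<Sum>w\<in>UNIV. v i w))"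
        by (simp add: sum_distrib_left)
      also have "\<dots> = (\<Sum>i\<in>fib a. l i / W a)"
        using vD fI by (intro sum.cong) (auto simp: Delta_def)
      finally show ?thesis using wsum[OF that] by simp
    qed
    ultimately show ?thesis by (simp add: Delta_def)
  qed
  have Hb: "(\<Sum>i\<in>fib a. l i * H (v i)) \<le> W a * H (vb a)" if "a \<in> J" for a
  proof -
    have ne: "fib a \<noteq> {}" using that by (auto simp: J_def fib_def)
    have "(\<Sum>i\<in>fib a. (l i / W a) * H (v i)) \<le> H (vb a)"
      unfolding vb_def using Wpos[OF that] lpos vD fI wsum[OF that]
      by (intro H_concave[OF finF ne]) (auto intro: divide_nonneg_pos less_imp_le)
    then have "W a * (\<Sum>i\<in>fib a. (l i / W a) * H (v i)) \<le> W a * H (vb a)"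
      using Wpos[OF that] by (simp add: mult_left_mono)
    then show ?thesis using mix[OF that] by simp
  qed
  have em: "expu u (vb a) x = (\<Sum>i\<in>fib a. (l i / W a) * expu u (v i) x)" for u :: "'w \<Rightarrow> 'a \<Rightarrow> real" and a x
    unfolding vb_def by (rule expu_mix)
  have Ub: "(\<Sum>i\<in>fib a. l i * ustarS uS uR (v i)) \<le> W a * ustarS uS uR (vb a)" if "a \<in> J" for a
  proof -
    obtain b where b: "b \<in> Astar uR (vb a)" "expu uS (vb a) b = ustarS uS uR (vb a)"
      using ustar_attained by blast
    have actA: "i \<in> fib a \<Longrightarrow> a \<in> Astar uR (v i)" for i using act(1)[of i] by (auto simp: fib_def)
    have e: "(\<Sum>i\<in>fib a. (l i / W a) * (expu uR (v i) a - expu uR (v i) b)) = 0"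
    proof (rule antisym)
      have "(\<Sum>i\<in>fib a. (l i / W a) * (expu uR (v i) a - expu uR (v i) b))
          = expu uR (vb a) a - expu uR (vb a) b"
        by (simp add: em right_diff_distrib sum_subtractf)
      also have "\<dots> \<le> 0" using b(1) by (simp add: Astar_def)
      finally show "(\<Sum>i\<in>fib a. (l i / W a) * (expu uR (v i) a - expu uR (v i) b)) \<le> 0" .
      show "0 \<le> (\<Sum>i\<in>fib a. (l i / W a) * (expu uR (v i) a - expu uR (v i) b))"
        using actA Wpos[OF that] lpos
        by (intro sum_nonneg mult_nonneg_nonneg) (auto simp: Astar_def intro: divide_nonneg_pos less_imp_le)
    qed
    have bA: "b \<in> Astar uR (v i)" if i: "i \<in> fib a" for i
    proof -
      have "(l i / W a) * (expu uR (v i) a - expu uR (v i) b) = 0"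
      proof -
        have nn: "\<And>j. j \<in> fib a \<Longrightarrow> 0 \<le> (l j / W a) * (expu uR (v j) a - expu uR (v j) b)"
          using actA Wpos[OF \<open>a \<in> J\<close>] lpos
          by (intro mult_nonneg_nonneg) (auto simp: Astar_def intro: divide_nonneg_pos less_imp_le)
        show ?thesis
          using sum_nonneg_0[where f="\<lambda>j. (l j / W a) * (expu uR (v j) a - expu uR (v j) b)", OF finF[of a]] nn e i
          by blast
      qed
      then have "expu uR (v i) a = expu uR (v i) b" using lpos[OF i] Wpos[OF \<open>a \<in> J\<close>] by simp
      then show ?thesis using actA[OF i] by (simp add: Astar_def)
    qed
    have "(\<Sum>i\<in>fib a. (l i / W a) * ustarS uS uR (v i)) \<le> (\<Sum>i\<in>fib a. (l i / W a) * expu uS (v i) b)"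
      using bA Wpos[OF that] lpos
      by (intro sum_mono mult_left_mono ustar_le) (auto intro: divide_nonneg_pos less_imp_le)
    also have "\<dots> = ustarS uS uR (vb a)" using b(2) by (simp add: em)
    finally have "W a * (\<Sum>i\<in>fib a. (l i / W a) * ustarS uS uR (v i)) \<le> W a * ustarS uS uR (vb a)"
      using Wpos[OF that] by (simp add: mult_left_mono)
    then show ?thesis using mix[OF that] by simp
  qed
  have mb: "W a * vb a w = (\<Sum>i\<in>fib a. l i * v i w)" if "a \<in> J" for a w
    using mix[OF that] by (simp add: vb_def)
  have "ffeas mu c J W vb"
    unfolding ffeas_def
  proof (intro conjI ballI allI)
    show "finite J" by simp
    show "0 \<le> W a" if "a \<in> J" for a using Wpos[OF that] by simp
    show "vb a \<in> Delta" if "a \<in> J" for a using vbD[OF that] .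
    show "sum W J = 1"
      using grp[of l] sumQ[of "\<lambda>_. 1"] s1 by (simp add: W_def)
    show "(\<Sum>a\<in>J. W a * vb a w) = mu w" for w
      using grp[of "\<lambda>i. l i * v i w"] sumQ[of "\<lambda>i. v i w"] mean[of w] mb by simp
    have "(\<Sum>i\<in>I. l i * H (v i)) = (\<Sum>a\<in>J. \<Sum>i\<in>fib a. l i * H (v i))"
      using grp sumQ by simp
    also have "\<dots> \<le> (\<Sum>a\<in>J. W a * H (vb a))" using Hb by (intro sum_mono) auto
    finally show "H mu - c \<le> (\<Sum>a\<in>J. W a * H (vb a))" using ent by simp
  qed
  moreover have "fobj uS uR I l v \<le> fobj uS uR J W vb"
  proof -
    have "fobj uS uR I l v = (\<Sum>a\<in>J. \<Sum>i\<in>fib a. l i * ustarS uS uR (v i))"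
      unfolding fobj_def using grp sumQ by simp
    also have "\<dots> \<le> (\<Sum>a\<in>J. W a * ustarS uS uR (vb a))" using Ub by (intro sum_mono) auto
    finally show ?thesis by (simp add: fobj_def)
  qed
  ultimately show ?thesis by blast
qed


lemma dep:
  fixes v :: "'i \<Rightarrow> 'w::finite \<Rightarrow> real"
  assumes finI: "finite I" and cI: "CARD('w) + 1 < card I"
  shows "\<exists>d. (\<forall>w. (\<Sum>k\<in>I. d k * v k w) = 0) \<and> (\<Sum>k\<in>I. d k * H (v k)) = 0 \<and> (\<exists>k\<in>I. d k \<noteq> 0)"
proof -
  define f where "f k = ((\<chi> w. v k w) :: real^'w, H (v k))" for k
  show ?thesis
  proof (cases "inj_on f I")
    case False
    then obtain i j where ij: "i \<in> I" "j \<in> I" "i \<noteq> j" "f i = f j" by (auto simp: inj_on_def)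
    then have "v i w = v j w" for w
      by (metis (no_types, lifting) f_def fst_conv vec_lambda_beta)
    then have vij: "v i = v j" by (simp add: fun_eq_iff)
    define d where "d k = (if k = i then 1 else if k = j then -1 else (0::real))" for k
    have sd: "(\<Sum>k\<in>I. d k * g k) = g i - g j" for g :: "'i \<Rightarrow> real"
    proof -
      have "(\<Sum>k\<in>I. d k * g k) = (\<Sum>k\<in>I. (if k = i then g k else 0) - (if k = j then g k else 0))"
        by (rule sum.cong) (auto simp: d_def ij(3))
      also have "\<dots> = g i - g j" using ij finI by (simp add: sum_subtractf)
      finally show ?thesis .
    qed
    have "d i \<noteq> 0" by (simp add: d_def)
    then show ?thesis using sd vij ij by (intro exI[of _ d]) auto
  next
    case True
    let ?S = "f ` I"
    have "card ?S = card I" using card_image[OF True] .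
    then have "dependent ?S" using cI finI by (intro dependent_biggerset) auto
    then obtain T U where TU: "finite T" "T \<subseteq> ?S" "(\<Sum>x\<in>T. U x *\<^sub>R x) = 0" "\<exists>x\<in>T. U x \<noteq> 0"
      unfolding dependent_explicit by blast
    define d where "d k = (if f k \<in> T then U (f k) else 0)" for k
    have "(\<Sum>k\<in>I. d k *\<^sub>R f k) = (\<Sum>x\<in>?S. (if x \<in> T then U x else 0) *\<^sub>R x)"
      by (subst sum.reindex[OF True]) (simp add: d_def comp_def)
    also have "\<dots> = (\<Sum>x\<in>?S. if x \<in> T then U x *\<^sub>R x else 0)"
      by (rule sum.cong) auto
    also have "\<dots> = (\<Sum>x\<in>?S \<inter> T. U x *\<^sub>R x)"
      using finI by (simp add: sum.inter_restrict)
    also have "?S \<inter> T = T" using TU(2) by blast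
    finally have z: "(\<Sum>k\<in>I. d k *\<^sub>R f k) = 0" using TU(3) by simp
    have c1: "(\<Sum>k\<in>I. d k * v k w) = 0" for w
    proof -
      have "fst (\<Sum>k\<in>I. d k *\<^sub>R f k) $ w = 0" using z by simp
      then show ?thesis by (simp add: fst_sum f_def)
    qed
    have c2: "(\<Sum>k\<in>I. d k * H (v k)) = 0"
    proof -
      have "snd (\<Sum>k\<in>I. d k *\<^sub>R f k) = 0" using z by simp
      then show ?thesis by (simp add: snd_sum f_def)
    qed
    from TU(4) obtain x where x: "x \<in> T" "U x \<noteq> 0" by blast
    with TU(2) obtain k where "k \<in> I" "x = f k" by blast
    then have "\<exists>k\<in>I. d k \<noteq> 0" using x by (auto simp: d_def)
    then show ?thesis using c1 c2 by blast
  qed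
qed

lemma shift:
  fixes uS uR :: "'w::finite \<Rightarrow> 'a::finite \<Rightarrow> real" and v :: "'i \<Rightarrow> 'w \<Rightarrow> real"
  assumes F: "ffeas mu c I l v" and lp: "\<forall>i\<in>I. 0 < l i"
    and d1: "\<forall>w. (\<Sum>k\<in>I. d k * v k w) = 0" and d2: "(\<Sum>k\<in>I. d k * H (v k)) = 0"
    and d3: "0 \<le> (\<Sum>k\<in>I. d k * ustarS uS uR (v k))" and d4: "\<exists>k\<in>I. d k \<noteq> 0"
  shows "\<exists>k0\<in>I. \<exists>l'. ffeas mu c (I - {k0}) l' v \<and> fobj uS uR I l v \<le> fobj uS uR (I - {k0}) l' v"
proof -
  from F have finI: "finite I" and vD: "\<And>i. i \<in> I \<Longrightarrow> v i \<in> Delta"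
    and s1: "sum l I = 1" and mean: "\<And>w. (\<Sum>i\<in>I. l i * v i w) = mu w"
    and ent: "(\<Sum>i\<in>I. l i * H (v i)) \<ge> H mu - c"
    by (auto simp: ffeas_def)
  have sd: "sum d I = 0"
  proof -
    have "sum d I = (\<Sum>k\<in>I. d k * (\<Sum>w\<in>UNIV. v k w))"
      using vD by (intro sum.cong) (auto simp: Delta_def)
    also have "\<dots> = (\<Sum>k\<in>I. \<Sum>w\<in>UNIV. d k * v k w)" by (simp add: sum_distrib_left)
    also have "\<dots> = (\<Sum>w\<in>UNIV. \<Sum>k\<in>I. d k * v k w)" by (rule sum.swap)
    also have "\<dots> = 0" using d1 by simp
    finally show ?thesis .
  qed
  have "\<exists>k\<in>I. d k < 0"
  proof (rule ccontr)
    assume "\<not> ?thesis"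
    then have nn: "\<And>k. k \<in> I \<Longrightarrow> 0 \<le> d k" by force
    have "\<forall>k\<in>I. d k = 0" using sum_nonneg_eq_0_iff[OF finI, of d] nn sd by blast
    then show False using d4 by blast
  qed
  define N where "N = {k\<in>I. d k < 0}"
  define t where "t = Min ((\<lambda>k. l k / - d k) ` N)"
  have finN: "finite N" using finI by (simp add: N_def)
  have neN: "N \<noteq> {}" using \<open>\<exists>k\<in>I. d k < 0\<close> by (auto simp: N_def)
  have "t \<in> (\<lambda>k. l k / - d k) ` N" unfolding t_def using finN neN by (intro Min_in) auto
  then obtain k0 where k0: "k0 \<in> N" "t = l k0 / - d k0" by blast
  have tle: "t \<le> l k / - d k" if "k \<in> N" for k
    unfolding t_def using finN that by (intro Min_le) auto
  have k0I: "k0 \<in> I" "d k0 < 0" using k0 by (auto simp: N_def)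
  have "0 < l k0" using lp k0I by blast
  then have t0: "0 \<le> t" using k0(2) k0I(2) divide_pos_neg[of "l k0" "d k0"] by simp
  define l' where "l' k = l k + t * d k" for k
  have l'0: "0 \<le> l' k" if k: "k \<in> I" for k
  proof (cases "d k < 0")
    case True
    then have "k \<in> N" using k by (simp add: N_def)
    then have "t \<le> l k / - d k" by (rule tle)
    then have "t * - d k \<le> l k" using True pos_le_divide_eq[of "- d k" t "l k"] by linarith
    then show ?thesis by (simp add: l'_def)
  next
    case False
    then have "0 \<le> t * d k" using t0 by simp
    moreover have "0 \<le> l k" using lp k by (simp add: less_imp_le)
    ultimately show ?thesis by (simp add: l'_def)
  qed
  have l'k0: "l' k0 = 0" using k0 k0I by (simp add: l'_def field_simps)
  have gen: "(\<Sum>k\<in>I - {k0}. l' k * g k) = (\<Sum>k\<in>I. l k * g k) + t * (\<Sum>k\<in>I. d k * g k)" for g :: "'i \<Rightarrow> real"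
  proof -
    have "(\<Sum>k\<in>I. l' k * g k) = l' k0 * g k0 + (\<Sum>k\<in>I - {k0}. l' k * g k)"
      by (rule sum.remove[OF finI k0I(1)])
    then have "(\<Sum>k\<in>I - {k0}. l' k * g k) = (\<Sum>k\<in>I. l' k * g k)" using l'k0 by simp
    also have "\<dots> = (\<Sum>k\<in>I. l k * g k + t * (d k * g k))"
      by (simp add: l'_def algebra_simps)
    also have "\<dots> = (\<Sum>k\<in>I. l k * g k) + t * (\<Sum>k\<in>I. d k * g k)"
      by (simp add: sum.distrib sum_distrib_left)
    finally show ?thesis .
  qed
  have "ffeas mu c (I - {k0}) l' v"
    unfolding ffeas_def
  proof (intro conjI ballI allI)
    show "finite (I - {k0})" using finI by simp
    show "0 \<le> l' i" if "i \<in> I - {k0}" for i using l'0 that by simp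
    show "v i \<in> Delta" if "i \<in> I - {k0}" for i using vD that by simp
    show "sum l' (I - {k0}) = 1" using gen[of "\<lambda>_. 1"] s1 sd by simp
    show "(\<Sum>i\<in>I - {k0}. l' i * v i w) = mu w" for w using gen[of "\<lambda>k. v k w"] mean d1 by simp
    show "H mu - c \<le> (\<Sum>i\<in>I - {k0}. l' i * H (v i))" using gen[of "\<lambda>k. H (v k)"] ent d2 by simp
  qed
  moreover have "fobj uS uR I l v \<le> fobj uS uR (I - {k0}) l' v"
    unfolding fobj_def using gen[of "\<lambda>k. ustarS uS uR (v k)"] d3 t0 by simp
  ultimately show ?thesis using k0I by blast
qed


lemma step2:
  fixes v :: "'i \<Rightarrow> 'w::finite \<Rightarrow> real" and uS uR :: "'w \<Rightarrow> 'a::finite \<Rightarrow> real"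
  shows "ffeas mu c I l v \<Longrightarrow> \<exists>J l'. J \<subseteq> I \<and> ffeas mu c J l' v \<and> card J \<le> CARD('w) + 1 \<and>
            fobj uS uR I l v \<le> fobj uS uR J l' v"
proof (induction "card I" arbitrary: I l rule: less_induct)
  case less
  have finI: "finite I" and l0: "\<And>i. i \<in> I \<Longrightarrow> 0 \<le> l i" using less.prems by (auto simp: ffeas_def)
  show ?case
  proof (cases "card I \<le> CARD('w) + 1")
    case True then show ?thesis using less.prems by blast
  next
    case False
    show ?thesis
    proof (cases "\<exists>k\<in>I. l k = 0")
      case True
      then obtain k where k: "k \<in> I" "l k = 0" by blast
      have rm: "(\<Sum>i\<in>I - {k}. l i * g i) = (\<Sum>i\<in>I. l i * g i)" for g :: "'i \<Rightarrow> real"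
        using sum.remove[OF finI k(1), of "\<lambda>i. l i * g i"] k(2) by simp
      have rm1: "sum l (I - {k}) = sum l I"
        using sum.remove[OF finI k(1), of l] k(2) by simp
      have "ffeas mu c (I - {k}) l v" using less.prems rm rm1 by (simp add: ffeas_def)
      moreover have "card (I - {k}) < card I" using finI k(1) by (rule card_Diff1_less)
      ultimately obtain J l' where J: "J \<subseteq> I - {k}" "ffeas mu c J l' v" "card J \<le> CARD('w) + 1"
          "fobj uS uR (I - {k}) l v \<le> fobj uS uR J l' v"
        using less.hyps by blast
      have "fobj uS uR (I - {k}) l v = fobj uS uR I l v" unfolding fobj_def by (rule rm)
      then show ?thesis using J by (intro exI[of _ J] exI[of _ l']) auto
    next
      case False
      then have lp: "\<forall>i\<in>I. 0 < l i" using l0 by (metis order_le_less)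
      obtain d where d: "\<forall>w. (\<Sum>k\<in>I. d k * v k w) = 0" "(\<Sum>k\<in>I. d k * H (v k)) = 0" "\<exists>k\<in>I. d k \<noteq> 0"
        using dep[OF finI, of v] \<open>\<not> card I \<le> CARD('w) + 1\<close> by auto
      obtain e where e: "\<forall>w. (\<Sum>k\<in>I. e k * v k w) = 0" "(\<Sum>k\<in>I. e k * H (v k)) = 0"
          "0 \<le> (\<Sum>k\<in>I. e k * ustarS uS uR (v k))" "\<exists>k\<in>I. e k \<noteq> 0"
      proof (cases "0 \<le> (\<Sum>k\<in>I. d k * ustarS uS uR (v k))")
        case True then show ?thesis using that d by blast
      next
        case False
        have "\<forall>w. (\<Sum>k\<in>I. (- d k) * v k w) = 0" using d(1) by (simp add: sum_negf)
        moreover have "(\<Sum>k\<in>I. (- d k) * H (v k)) = 0" using d(2) by (simp add: sum_negf)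
        moreover have "0 \<le> (\<Sum>k\<in>I. (- d k) * ustarS uS uR (v k))" using False by (simp add: sum_negf)
        moreover have "\<exists>k\<in>I. - d k \<noteq> 0" using d(3) by simp
        ultimately show ?thesis using that[of "\<lambda>k. - d k"] by blast
      qed
      obtain k0 l' where k0: "k0 \<in> I" "ffeas mu c (I - {k0}) l' v"
          "fobj uS uR I l v \<le> fobj uS uR (I - {k0}) l' v"
        using shift[OF less.prems lp e(1) e(2) e(3) e(4)] by blast
      have "card (I - {k0}) < card I" using finI k0(1) by (rule card_Diff1_less)
      then obtain J l'' where J: "J \<subseteq> I - {k0}" "ffeas mu c J l'' v" "card J \<le> CARD('w) + 1"
          "fobj uS uR (I - {k0}) l' v \<le> fobj uS uR J l'' v"
        using less.hyps k0(2) by blast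
      then show ?thesis using k0(3) by (intro exI[of _ J] exI[of _ l'']) auto
    qed
  qed
qed

lemma sl: "sum_list (map f F) = (\<Sum>i<length F. f (F ! i))"
proof -
  have "sum_list (map f F) = (\<Sum>i<length F. map f F ! i)"
    by (simp add: sum_list_sum_nth atLeast0LessThan)
  also have "\<dots> = (\<Sum>i<length F. f (F!i))" by (rule sum.cong) auto
  finally show ?thesis .
qed

lemma list_fam:
  assumes "feasible mu c F"
  shows "ffeas mu c {..<length F} (\<lambda>i. fst (F!i)) (\<lambda>i. snd (F!i))"
    and "objval uS uR F = fobj uS uR {..<length F} (\<lambda>i. fst (F!i)) (\<lambda>i. snd (F!i))"
  using assms by (auto simp: feasible_def ffeas_def objval_def fobj_def sl)

lemma fam_list:
  assumes "ffeas mu c J l v"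
  shows "\<exists>F. feasible mu c F \<and> length F = card J \<and> objval uS uR F = fobj uS uR J l v"
proof -
  have "finite J" using assms by (simp add: ffeas_def)
  then obtain xs where xs: "set xs = J" "distinct xs" using finite_distinct_list by blast
  define F where "F = map (\<lambda>i. (l i, v i)) xs"
  have "feasible mu c F" using assms xs
    by (auto simp: F_def feasible_def ffeas_def o_def sum_list_distinct_conv_sum_set)
  moreover have "length F = card J" using xs distinct_card by (fastforce simp: F_def)
  moreover have "objval uS uR F = fobj uS uR J l v" using xs
    by (simp add: F_def objval_def fobj_def o_def sum_list_distinct_conv_sum_set)
  ultimately show ?thesis by blast
qed

lemma reduce:
  fixes uS uR :: "'w::finite \<Rightarrow> 'a::finite \<Rightarrow> real"
  assumes "feasible mu c F"
  shows "\<exists>F'. feasible mu c F' \<and> length F' \<le> min CARD('a) (CARD('w) + 1) \<and> objval uS uR F \<le> objval uS uR F'"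
proof -
  note L = list_fam[OF assms]
  obtain J :: "'a set" and l' v' where J: "ffeas mu c J l' v'"
      "fobj uS uR {..<length F} (\<lambda>i. fst (F!i)) (\<lambda>i. snd (F!i)) \<le> fobj uS uR J l' v'"
    using step1[OF L(1), of uS uR] by blast
  obtain J' l'' where J': "J' \<subseteq> J" "ffeas mu c J' l'' v'" "card J' \<le> CARD('w) + 1"
      "fobj uS uR J l' v' \<le> fobj uS uR J' l'' v'"
    using step2[OF J(1), of uS uR] by blast
  obtain F' where F': "feasible mu c F'" "length F' = card J'" "objval uS uR F' = fobj uS uR J' l'' v'"
    using fam_list[OF J'(2), of uS uR] by blast
  have "card J' \<le> CARD('a)" by (rule card_mono) auto
  then show ?thesis using F' J'(3) J'(4) J(2) L(2)[of uS uR] by (intro exI[of _ F']) auto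
qed

lemma ub:
  assumes "nu \<in> Delta"
  shows "ustarS uS uR nu \<le> (\<Sum>w\<in>UNIV. \<Sum>a\<in>UNIV. \<bar>uS w a\<bar>)"
proof -
  let ?K = "(\<Sum>w\<in>UNIV. \<Sum>a\<in>UNIV. \<bar>uS w a\<bar>)"
  obtain a where a: "a \<in> Astar uR nu" using Astar_ne by blast
  have "ustarS uS uR nu \<le> expu uS nu a" by (rule ustar_le[OF a])
  also have "\<dots> \<le> (\<Sum>w\<in>UNIV. nu w * ?K)" unfolding expu_def
  proof (rule sum_mono)
    fix w
    have "uS w a \<le> \<bar>uS w a\<bar>" by simp
    also have "\<dots> \<le> (\<Sum>b\<in>UNIV. \<bar>uS w b\<bar>)" by (rule member_le_sum) auto
    also have "\<dots> \<le> ?K" by (rule member_le_sum) (auto intro: sum_nonneg)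
    finally show "nu w * uS w a \<le> nu w * ?K" using assms by (intro mult_left_mono) (auto simp: Delta_def)
  qed
  also have "\<dots> = ?K" using assms by (simp add: Delta_def sum_distrib_right[symmetric])
  finally show ?thesis .
qed

lemma obj_bound:
  assumes "feasible mu c F"
  shows "objval uS uR F \<le> (\<Sum>w\<in>UNIV. \<Sum>a\<in>UNIV. \<bar>uS w a\<bar>)"
proof -
  let ?K = "(\<Sum>w\<in>UNIV. \<Sum>a\<in>UNIV. \<bar>uS w a\<bar>)"
  note L = list_fam[OF assms]
  have fe: "ffeas mu c {..<length F} (\<lambda>i. fst (F!i)) (\<lambda>i. snd (F!i))" by (rule L(1))
  have "objval uS uR F = (\<Sum>i<length F. fst (F!i) * ustarS uS uR (snd (F!i)))"
    using L(2) by (simp add: fobj_def)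
  also have "\<dots> \<le> (\<Sum>i<length F. fst (F!i) * ?K)"
    using fe by (intro sum_mono mult_left_mono ub) (auto simp: ffeas_def)
  also have "\<dots> = ?K" using fe by (simp add: ffeas_def sum_distrib_right[symmetric])
  finally show ?thesis .
qed

theorem corollary3:
  fixes uS uR :: "'w::finite \<Rightarrow> 'a::finite \<Rightarrow> real"
    and mu :: "'w \<Rightarrow> real" and c :: real
  assumes "mu \<in> Delta" and "0 \<le> c"
  shows "V uS uR mu c =
    Sup (objval uS uR ` {F. feasible mu c F \<and> length F \<le> min CARD('a) (CARD('w) + 1)})"
proof -
  let ?A = "objval uS uR ` {F. feasible mu c F}"
  let ?B = "objval uS uR ` {F. feasible mu c F \<and> length F \<le> min CARD('a) (CARD('w) + 1)}"
  let ?K = "(\<Sum>w\<in>UNIV. \<Sum>a\<in>UNIV. \<bar>uS w a\<bar>)"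
  have F1: "feasible mu c [(1, mu)]" using assms by (simp add: feasible_def)
  have "length [(1::real, mu)] \<le> min CARD('a) (CARD('w) + 1)"
    by (simp add: Suc_le_eq)
  then have neB: "?B \<noteq> {}" using F1 by blast
  have bA: "bdd_above ?A" by (rule bdd_aboveI[of _ ?K]) (auto intro: obj_bound)
  have BA: "?B \<subseteq> ?A" by blast
  have bB: "bdd_above ?B" using bdd_above_mono[OF bA BA] .
  have "Sup ?A \<le> Sup ?B"
  proof (rule cSup_mono)
    show "?A \<noteq> {}" using F1 by blast
    show "bdd_above ?B" by (rule bB)
    fix x assume "x \<in> ?A"
    then obtain F where "feasible mu c F" "x = objval uS uR F" by blast
    then show "\<exists>y\<in>?B. x \<le> y" using reduce[of mu c F uS uR] by blast
  qed
  moreover have "Sup ?B \<le> Sup ?A" by (rule cSup_subset_mono[OF neB bA BA])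
  ultimately show ?thesis unfolding V_def by (rule antisym)
qed

end
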